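(* Assume the setting, construction and assumptions (A1)–(A6) described in the context. Then there are positive constants $M,C,c_3,c_4$ such that $$P\Big(\max_{i\le n}|h(Z_i)-h_0(Z_i)|\ge Ms\sqrt{\tfrac{\log(d\vee n)}{n}}\ \Big|\ Y,X,Z\Big)\le C(d\vee n)^{-c_3}$$ on an event $\mathcal{E}_3$ with $P(\mathcal{E}_3)\ge1-(d\vee n)^{-c_3}$, and $$P\Big(\max_{i\le n}|\phi_i-\phi_{0i}|\ge Ms\sqrt{\tfrac{\log(d\vee n)}{n}}\ \Big|\ Y,X,Z\Big)\le C(d\vee n)^{-c_4}$$ on an event $\mathcal{E}_4$ with $P(\mathcal{E}_4)\ge1-(d\vee n)^{-c_4}$.
   Context: Data: for $i=1,\dots,n$, observations $(Y_i,X_i,Z_i)$ with $Y_i\in\{0,1\}$, $X_i\in\{0,1\}$, $Z_i\in\mathbb{R}^d$. The responses are independently generated from $P(Y_i=1\mid X_i,Z_i)=\frac{\exp(X_i\theta_0+Z_i^T\beta_0)}{1+\exp(X_i\theta_0+Z_i^T\beta_0)}$ with true $\theta_0\in\mathbb{R}$, $\beta_0\in\mathbb{R}^d$; $s$ is the number of nonzero entries of $\beta_0$. $P(X_i=1\mid Z_i)$ is the true propensity score. Write $a\vee b=\max\{a,b\}$. Oracle quantities: with $p_{ik}=\frac{\exp(k\theta_0+Z_i^T\beta_0)}{1+\exp(k\theta_0+Z_i^T\beta_0)}$ for $k\in\{0,1\}$, $R_{0i}=\frac{p_{i0}(1-p_{i0})P(X_i=0\mid Z_i)}{p_{i1}(1-p_{i1})P(X_i=1\mid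 Z_i)}$, $h_0(Z_i)=1/(1+R_{0i})$, $\phi_{0i}=\theta_0h_0(Z_i)+Z_i^T\beta_0$. Construction: priors $\pi(\tilde\theta),\pi(\beta),\pi(\gamma)$. Draw $(\tilde\theta,\beta)$ from $f((\tilde\theta,\beta)\mid Y,X,Z)\propto \pi(\tilde\theta)\pi(\beta)\prod_{i=1}^n\frac{\exp(X_i\tilde\theta+Z_i^T\beta)^{Y_i}}{1+\exp(X_i\tilde\theta+Z_i^T\beta)}$ and $\gamma\in\mathbb{R}^d$ from $f(\gamma\mid X,Z)\propto\pi(\gamma)\prod_{i=1}^n\frac{\exp(Z_i^T\gamma)^{X_i}}{1+\exp(Z_i^T\gamma)}$. Set $P(X_i=1\mid Z_i,\gamma)=\frac{\exp(Z_i^T\gamma)}{1+\exp(Z_i^T\gamma)}$, $q_{ik}=\frac{\exp(k\tilde\theta+Z_i^T\beta)}{1+\exp(k\tilde\theta+Z_i^T\beta)}$, $R_i=\frac{q_{i0}(1-q_{i0})P(X_i=0\mid Z_i,\gamma)}{q_{i1}(1-q_{i1})P(X_i=1\mid Z_i,\gamma)}$, $h(Z_i)=1/(1+R_i)$, $\phi_i=\tilde\theta h(Z_i)+Z_i^T\beta$. The probabilities conditional on $Y,X,Z$ in the claim are with respect to these posterior draws. Assumptions: (A1) $\log d=o(n)$. (A2) $\max_{i,j}|Z_{ij}|\le C$ for some $0<C<\infty$. (A3) $s^2\log(d\vee n)=o(\sqrt n)$. (A4) There are constants $M,C,c_1>0$ and an event $\mathcal{E}_1$ with $P(\mathcal{E}_1)\ge1-(d\vee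 n)^{-c_1}$ on which $P\big(\max\{\|(\tilde\theta,\beta)-(\theta_0,\beta_0)\|_1/s,\ \|(\tilde\theta,\beta)-(\theta_0,\beta_0)\|_2/s^{1/2}\}\ge M\sqrt{\log(d\vee n)/n}\mid Y,X,Z\big)\le C(d\vee n)^{-c_1}$. (A5) There are constants $M,C,c_2>0$ and an event $\mathcal{E}_2$ with $P(\mathcal{E}_2)\ge1-(d\vee n)^{-c_2}$ on which $P\Big(\max_{i\le n}\Big|\log\frac{P(X_i=1\mid Z_i,\gamma)/P(X_i=0\mid Z_i,\gamma)}{P(X_i=1\mid Z_i)/P(X_i=0\mid Z_i)}\Big|\ge M\sqrt{\log(d\vee n)/n}\mid X,Z\Big)\le C(d\vee n)^{-c_2}$. (A6) a prior $\pi(\theta)$ is continuous at $\theta_0$ with $\pi(\theta_0)>0$, and $|\theta_0|\le M_0$ for some $M_0>0$. *)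

theory Defs
  imports "HOL-Probability.Probability" "HOL-Library.Landau_Symbols"
begin

definition logistic :: "real \<Rightarrow> real" where
  "logistic t = exp t / (1 + exp t)"

definition lin :: "nat \<Rightarrow> (nat \<Rightarrow> real) \<Rightarrow> (nat \<Rightarrow> real) \<Rightarrow> real" where
  "lin d z b = (\<Sum>j<d. z j * b j)"

definition sparsity :: "nat \<Rightarrow> (nat \<Rightarrow> real) \<Rightarrow> nat" where
  "sparsity d b = card {j\<in>{..<d}. b j \<noteq> 0}"

definition NN :: "nat \<Rightarrow> nat \<Rightarrow> real" where
  "NN d n = real (max d n)"

definition rate :: "nat \<Rightarrow> nat \<Rightarrow> real" where
  "rate d n = sqrt (ln (NN d n) / real n)"

text \<open>Outcome-model likelihood prod_i exp(X_i t + Z_i^T b)^{Y_i} / (1 + exp(X_i t + Z_i^T b))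
  (Y_i in {0,1}, so exp(eta)^{Y_i} = exp(Y_i * eta)).\<close>
definition outcome_lik :: "nat \<Rightarrow> nat \<Rightarrow> (nat \<Rightarrow> real) \<Rightarrow> (nat \<Rightarrow> real) \<Rightarrow> (nat \<Rightarrow> nat \<Rightarrow> real)
    \<Rightarrow> real \<times> (nat \<Rightarrow> real) \<Rightarrow> real" where
  "outcome_lik n d Y X Z = (\<lambda>(t, b). \<Prod>i<n.
      exp (Y i * (X i * t + lin d (Z i) b)) / (1 + exp (X i * t + lin d (Z i) b)))"

definition ps_lik :: "nat \<Rightarrow> nat \<Rightarrow> (nat \<Rightarrow> real) \<Rightarrow> (nat \<Rightarrow> nat \<Rightarrow> real) \<Rightarrow> (nat \<Rightarrow> real) \<Rightarrow> real" where
  "ps_lik n d X Z g = (\<Prod>i<n. exp (X i * lin d (Z i) g) / (1 + exp (lin d (Z i) g)))"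

definition posterior :: "'a measure \<Rightarrow> ('a \<Rightarrow> real) \<Rightarrow> 'a measure" where
  "posterior P L = density P (\<lambda>x. ennreal (L x / (\<integral>y. L y \<partial>P)))"

definition post_tb :: "(real \<Rightarrow> real) \<Rightarrow> (nat \<Rightarrow> real) measure \<Rightarrow> nat \<Rightarrow> nat
    \<Rightarrow> (nat \<Rightarrow> real) \<Rightarrow> (nat \<Rightarrow> real) \<Rightarrow> (nat \<Rightarrow> nat \<Rightarrow> real) \<Rightarrow> (real \<times> (nat \<Rightarrow> real)) measure" where
  "post_tb piT piB n d Y X Z = posterior (density lborel piT \<Otimes>\<^sub>M piB) (outcome_lik n d Y X Z)"

definition post_g :: "(nat \<Rightarrow> real) measure \<Rightarrow> nat \<Rightarrow> nat
    \<Rightarrow> (nat \<Rightarrow> real) \<Rightarrow> (nat \<Rightarrow> nat \<Rightarrow> real) \<Rightarrow> (nat \<Rightarrow> real) measure" where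
  "post_g piG n d X Z = posterior piG (ps_lik n d X Z)"

text \<open>h = 1/(1+R), with R = q0(1-q0) P(X=0|Z) / (q1(1-q1) P(X=1|Z)),
  q_k = logistic(k t + eta), eta = Z^T beta, e = P(X=1|Z).\<close>
definition hval :: "real \<Rightarrow> real \<Rightarrow> real \<Rightarrow> real" where
  "hval t eta e =
     (let q0 = logistic eta; q1 = logistic (t + eta);
          R = (q0 * (1 - q0) * (1 - e)) / (q1 * (1 - q1) * e)
      in 1 / (1 + R))"

definition gen_sigma :: "'w measure \<Rightarrow> ('w \<Rightarrow> real) set \<Rightarrow> 'w measure" where
  "gen_sigma M fs = sigma (space M) {f -` B \<inter> space M | f B. f \<in> fs \<and> B \<in> sets borel}"

definition dist1 :: "nat \<Rightarrow> real \<Rightarrow> (nat \<Rightarrow> real) \<Rightarrow> real \<Rightarrow> (nat \<Rightarrow> real) \<Rightarrow> real" where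
  "dist1 d t b t0 b0 = \<bar>t - t0\<bar> + (\<Sum>j<d. \<bar>b j - b0 j\<bar>)"

definition dist2 :: "nat \<Rightarrow> real \<Rightarrow> (nat \<Rightarrow> real) \<Rightarrow> real \<Rightarrow> (nat \<Rightarrow> real) \<Rightarrow> real" where
  "dist2 d t b t0 b0 = sqrt ((t - t0)\<^sup>2 + (\<Sum>j<d. (b j - b0 j)\<^sup>2))"

end

theory Submission
  imports Defs "HOL-Real_Asymp.Real_Asymp"
begin


lemma posterior_sets[simp]: "sets (posterior P L) = sets P"
  by (simp add: posterior_def)
lemma posterior_space[simp]: "space (posterior P L) = space P"
  by (simp add: posterior_def)

lemma posterior_total:
  assumes nn: "\<And>x. 0 \<le> L x"
  shows "emeasure (posterior P L) (space P) \<le> 1"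
proof (cases "integrable P L")
  case False
  hence "(\<integral>y. L y \<partial>P) = 0" by (rule not_integrable_integral_eq)
  thus ?thesis by (simp add: posterior_def emeasure_density)
next
  case True
  define c where "c = (\<integral>y. L y \<partial>P)"
  have c0: "0 \<le> c" unfolding c_def using nn by (simp add: integral_nonneg)
  have m: "(\<lambda>x. ennreal (L x / c)) \<in> borel_measurable P"
    using True by measurable
  have "emeasure (posterior P L) (space P) = (\<integral>\<^sup>+x. ennreal (L x / c) \<partial>P)"
    unfolding posterior_def c_def[symmetric] using m
    by (simp add: emeasure_density)
  also have "\<dots> = ennreal (\<integral>x. L x / c \<partial>P)"
    using True nn c0 by (intro nn_integral_eq_integral) auto
  also have "\<dots> \<le> 1" using c0 by (cases "c = 0") (auto simp: c_def)
  finally show ?thesis .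
qed

lemma posterior_finite:
  assumes nn: "\<And>x. 0 \<le> L x"
  shows "finite_measure (posterior P L)" and "measure (posterior P L) (space P) \<le> 1"
proof -
  have e: "emeasure (posterior P L) (space P) \<le> 1" by (rule posterior_total[OF nn])
  show "finite_measure (posterior P L)"
    by (rule finite_measureI) (use e in \<open>auto simp: top_unique\<close>)
  show "measure (posterior P L) (space P) \<le> 1"
    using e by (simp add: measure_def enn2real_leI)
qed

lemma prod_bound:
  assumes f1: "finite_measure P1" and f2: "finite_measure P2"
    and t1: "measure P1 (space P1) \<le> 1" and t2: "measure P2 (space P2) \<le> 1"
    and B: "B \<in> sets P1" and G: "G \<in> sets P2"
    and S: "S \<subseteq> (B \<times> space P2) \<union> (space P1 \<times> G)"
  shows "measure (P1 \<Otimes>\<^sub>M P2) S \<le> measure P1 B + measure P2 G"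
proof -
  interpret F: finite_measure "P1 \<Otimes>\<^sub>M P2" by (rule finite_measure_pair_measure[OF f2 f1])
  interpret P1: finite_measure P1 by fact
  interpret P2: finite_measure P2 by fact
  have s1: "B \<times> space P2 \<in> sets (P1 \<Otimes>\<^sub>M P2)" using B by auto
  have s2: "space P1 \<times> G \<in> sets (P1 \<Otimes>\<^sub>M P2)" using G by auto
  have m1: "measure (P1 \<Otimes>\<^sub>M P2) (B \<times> space P2) = measure P1 B * measure P2 (space P2)"
    using B by (simp add: measure_def P2.emeasure_pair_measure_Times enn2real_mult)
  have m2: "measure (P1 \<Otimes>\<^sub>M P2) (space P1 \<times> G) = measure P1 (space P1) * measure P2 G"
    using G by (simp add: measure_def P2.emeasure_pair_measure_Times enn2real_mult)
  have "measure (P1 \<Otimes>\<^sub>M P2) S \<le> measure (P1 \<Otimes>\<^sub>M P2) ((B \<times> space P2) \<union> (space P1 \<times> G))"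
    using S s1 s2 by (intro F.finite_measure_mono) auto
  also have "\<dots> \<le> measure P1 B * measure P2 (space P2) + measure P1 (space P1) * measure P2 G"
    using measure_Un_le[OF s1 s2] m1 m2 by simp
  also have "\<dots> \<le> measure P1 B * 1 + 1 * measure P2 G"
    using t1 t2 by (intro add_mono mult_left_mono mult_right_mono) auto
  finally show ?thesis by simp
qed



lemma lip_from_deriv:
  fixes f f' :: "real \<Rightarrow> real"
  assumes d: "\<And>x. (f has_real_derivative f' x) (at x)" and b: "\<And>x. \<bar>f' x\<bar> \<le> 1"
  shows "\<bar>f a - f b\<bar> \<le> \<bar>a - b\<bar>"
proof -
  have *: "\<bar>f y - f x\<bar> \<le> y - x" if "x < y" for x y
  proof -
    have "\<exists>z>x. z < y \<and> f y - f x = (y - x) * f' z"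
      by (rule MVT2) (use that d in auto)
    then obtain z where "f y - f x = (y - x) * f' z" by blast
    hence "\<bar>f y - f x\<bar> = (y - x) * \<bar>f' z\<bar>" using that by (simp add: abs_mult)
    also have "\<dots> \<le> (y - x) * 1" using b[of z] that by (intro mult_left_mono) auto
    finally show ?thesis by simp
  qed
  show ?thesis
    using *[of a b] *[of b a] by (cases a b rule: linorder_cases) auto
qed

lemma onepexp[simp]: "1 + exp (x::real) \<noteq> 0" "0 < 1 + exp (x::real)" "exp x + 1 \<noteq> 0"
  using exp_gt_zero[of x] by linarith+

lemma logistic_pos: "0 < logistic x" and logistic_lt1: "logistic x < 1"
  by (auto simp: logistic_def)

lemma logistic_deriv: "(logistic has_real_derivative (exp x / (1 + exp x)^2)) (at x)"
  unfolding logistic_def[abs_def]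
  by (auto intro!: derivative_eq_intros simp: power2_eq_square field_simps add_pos_pos)

lemma logistic_lip: "\<bar>logistic a - logistic b\<bar> \<le> \<bar>a - b\<bar>"
proof (rule lip_from_deriv[OF logistic_deriv])
  fix x :: real
  have "exp x \<le> (1 + exp x)^2" by (simp add: power2_eq_square algebra_simps)
  thus "\<bar>exp x / (1 + exp x)^2\<bar> \<le> 1" by (simp add: divide_le_eq_1)
qed

definition ell :: "real \<Rightarrow> real" where "ell x = ln (logistic x * (1 - logistic x))"

lemma ell_eq: "ell x = x - 2 * ln (1 + exp x)"
proof -
  have "logistic x * (1 - logistic x) = exp x / (1 + exp x)^2"
    by (simp add: logistic_def field_simps power2_eq_square add_pos_pos)
  thus ?thesis unfolding ell_def
    using ln_realpow[of "1 + exp x" 2] by (simp add: ln_div)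
qed

lemma ell_lip: "\<bar>ell a - ell b\<bar> \<le> \<bar>a - b\<bar>"
proof (rule lip_from_deriv[where f' = "\<lambda>x. 1 - 2 * (exp x / (1 + exp x))"])
  fix x :: real
  show "(ell has_real_derivative 1 - 2 * (exp x / (1 + exp x))) (at x)"
    unfolding ell_eq[abs_def]
    by (auto intro!: derivative_eq_intros simp: add_pos_pos field_simps)
  have "0 < exp x / (1 + exp x)" "exp x / (1 + exp x) < 1" by (auto simp: add_pos_pos)
  thus "\<bar>1 - 2 * (exp x / (1 + exp x))\<bar> \<le> 1" by linarith
qed

lemma hval_eq:
  assumes "0 < e" "e < 1"
  shows "hval t eta e = logistic (- (ell eta + ln (1 - e) - ell (t + eta) - ln e))"
proof -
  define q0 where "q0 = logistic eta"
  define q1 where "q1 = logistic (t + eta)"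
  have p0: "0 < q0 * (1 - q0)" "0 < q1 * (1 - q1)"
    unfolding q0_def q1_def using logistic_pos logistic_lt1 by (auto intro: mult_pos_pos)
  have R: "(q0 * (1 - q0) * (1 - e)) / (q1 * (1 - q1) * e)
     = exp (ell eta + ln (1 - e) - ell (t + eta) - ln e)"
    using p0 assms unfolding ell_def q0_def[symmetric] q1_def[symmetric]
    by (simp add: exp_diff exp_add)
  have lm: "logistic (- A) = 1 / (1 + exp A)" for A
    by (simp add: logistic_def exp_minus field_simps)
  show ?thesis
    unfolding hval_def Let_def q0_def[symmetric] q1_def[symmetric] R lm ..
qed

lemma hval_bounds: "0 < e \<Longrightarrow> e < 1 \<Longrightarrow> \<bar>hval t eta e\<bar> \<le> 1"
  using hval_eq[of e t eta] logistic_pos logistic_lt1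
  by (metis abs_of_pos less_le)

lemma hval_diff:
  assumes "0 < e" "e < 1" "0 < e'" "e' < 1"
  shows "\<bar>hval t eta e' - hval t0 eta0 e\<bar>
     \<le> 2 * \<bar>eta - eta0\<bar> + \<bar>t - t0\<bar> + \<bar>ln ((e' / (1 - e')) / (e / (1 - e)))\<bar>"
proof -
  have L: "ln ((e' / (1 - e')) / (e / (1 - e))) = ln e' - ln (1 - e') - ln e + ln (1 - e)"
    using assms by (simp add: ln_div ln_mult)
  have "\<bar>hval t eta e' - hval t0 eta0 e\<bar>
     \<le> \<bar>(ell eta + ln (1 - e') - ell (t + eta) - ln e') - (ell eta0 + ln (1 - e) - ell (t0 + eta0) - ln e)\<bar>"
    unfolding hval_eq[OF assms(3,4)] hval_eq[OF assms(1,2)]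
    using logistic_lip by (smt (verit))
  also have "\<dots> \<le> \<bar>ell eta - ell eta0\<bar> + \<bar>ell (t + eta) - ell (t0 + eta0)\<bar>
       + \<bar>ln ((e' / (1 - e')) / (e / (1 - e)))\<bar>"
    unfolding L by linarith
  also have "\<dots> \<le> \<bar>eta - eta0\<bar> + \<bar>(t + eta) - (t0 + eta0)\<bar> + \<bar>ln ((e' / (1 - e')) / (e / (1 - e)))\<bar>"
    by (intro add_mono ell_lip order.refl)
  moreover have "\<bar>(t + eta) - (t0 + eta0)\<bar> \<le> \<bar>t - t0\<bar> + \<bar>eta - eta0\<bar>" by linarith
  ultimately show ?thesis by linarith
qed

lemma logistic_odds: "logistic x / (1 - logistic x) = exp x"
  by (simp add: logistic_def field_simps add_pos_pos)

lemma lin_diff: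
  assumes "\<And>j. j < d \<Longrightarrow> \<bar>z j\<bar> \<le> CZ"
  shows "\<bar>lin d z b - lin d z b0\<bar> \<le> CZ * (\<Sum>j<d. \<bar>b j - b0 j\<bar>)"
proof -
  have "\<bar>lin d z b - lin d z b0\<bar> = \<bar>\<Sum>j<d. z j * (b j - b0 j)\<bar>"
    by (simp add: lin_def sum_subtractf[symmetric] algebra_simps)
  also have "\<dots> \<le> (\<Sum>j<d. \<bar>z j * (b j - b0 j)\<bar>)" by (rule sum_abs)
  also have "\<dots> \<le> (\<Sum>j<d. CZ * \<bar>b j - b0 j\<bar>)"
    using assms by (intro sum_mono) (auto simp: abs_mult intro: mult_right_mono)
  finally show ?thesis by (simp add: sum_distrib_left)
qed





lemma comp_meas:
  fixes N :: "(nat \<Rightarrow> real) measure"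
  assumes "sets N = sets (PiM {..<d} (\<lambda>_. lborel))" "j < d"
  shows "(\<lambda>b. b j) \<in> borel_measurable N"
proof -
  have "(\<lambda>b. b j) \<in> measurable (PiM {..<d} (\<lambda>_. lborel)) lborel"
    by (rule measurable_component_singleton) (use assms in auto)
  hence "(\<lambda>b. b j) \<in> borel_measurable (PiM {..<d} (\<lambda>_. lborel))" by simp
  thus ?thesis using measurable_cong_sets[OF assms(1) refl, of "borel :: real measure"] by simp
qed

lemma lin_meas:
  fixes N :: "(nat \<Rightarrow> real) measure"
  assumes "sets N = sets (PiM {..<d} (\<lambda>_. lborel))"
  shows "(\<lambda>b. lin d z b) \<in> borel_measurable N"
  unfolding lin_def
  by (intro borel_measurable_sum borel_measurable_times borel_measurable_const comp_meas[OF assms]) auto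

lemma d1_meas:
  fixes N :: "(nat \<Rightarrow> real) measure" and b0 :: "nat \<Rightarrow> real"
  assumes "sets N = sets (PiM {..<d} (\<lambda>_. lborel))"
  shows "(\<lambda>b. \<Sum>j<d. \<bar>b j - b0 j\<bar>) \<in> borel_measurable N"
proof (rule borel_measurable_sum[where f="\<lambda>j b. \<bar>b j - b0 j\<bar>"])
  fix j assume "j \<in> {..<d}"
  hence [measurable]: "(\<lambda>b. b j) \<in> borel_measurable N" using comp_meas[OF assms] by auto
  show "(\<lambda>b. \<bar>b j - b0 j\<bar>) \<in> borel_measurable N" by measurable
qed

lemma d2_meas:
  fixes N :: "(nat \<Rightarrow> real) measure" and b0 :: "nat \<Rightarrow> real"
  assumes "sets N = sets (PiM {..<d} (\<lambda>_. lborel))"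
  shows "(\<lambda>b. \<Sum>j<d. (b j - b0 j)\<^sup>2) \<in> borel_measurable N"
proof (rule borel_measurable_sum[where f="\<lambda>j b. (b j - b0 j)\<^sup>2"])
  fix j assume "j \<in> {..<d}"
  hence [measurable]: "(\<lambda>b. b j) \<in> borel_measurable N" using comp_meas[OF assms] by auto
  show "(\<lambda>b. (b j - b0 j)\<^sup>2) \<in> borel_measurable N" by measurable
qed

lemma badA_meas:
  fixes N :: "(nat \<Rightarrow> real) measure" and piT :: "real \<Rightarrow> real"
  assumes "sets N = sets (PiM {..<d} (\<lambda>_. lborel))" "piT \<in> borel_measurable lborel"
  shows "{x \<in> space (posterior (density lborel piT \<Otimes>\<^sub>M N) L).
           case x of (t, b) \<Rightarrow> max (dist1 d t b t0 b0 / s1) (dist2 d t b t0 b0 / s2) \<ge> c}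
         \<in> sets (posterior (density lborel piT \<Otimes>\<^sub>M N) L)"
proof -
  have [measurable]: "(\<lambda>b. \<Sum>j<d. \<bar>b j - b0 j\<bar>) \<in> borel_measurable N"
    "(\<lambda>b. \<Sum>j<d. (b j - b0 j)\<^sup>2) \<in> borel_measurable N"
    using d1_meas[OF assms(1)] d2_meas[OF assms(1)] by auto
  have "(\<lambda>x. case x of (t, b) \<Rightarrow> max (dist1 d t b t0 b0 / s1) (dist2 d t b t0 b0 / s2))
     \<in> borel_measurable (density lborel piT \<Otimes>\<^sub>M N)"
    unfolding dist1_def dist2_def split_beta by measurable
  hence "{x \<in> space (density lborel piT \<Otimes>\<^sub>M N).
           case x of (t, b) \<Rightarrow> max (dist1 d t b t0 b0 / s1) (dist2 d t b t0 b0 / s2) \<ge> c}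
         \<in> sets (density lborel piT \<Otimes>\<^sub>M N)" by measurable
  thus ?thesis unfolding posterior_sets posterior_space .
qed

lemma badB_meas:
  fixes n :: nat and N :: "(nat \<Rightarrow> real) measure"
  assumes "sets N = sets (PiM {..<d} (\<lambda>_. lborel))"
  shows "{g \<in> space (posterior N L).
           (MAX i\<in>{..<n}. \<bar>ln ((logistic (lin d (Z i) g) / (1 - logistic (lin d (Z i) g))) / (E i))\<bar>) \<ge> c}
         \<in> sets (posterior N L)"
proof -
  have [measurable]: "\<And>i. (\<lambda>g. lin d (Z i) g) \<in> borel_measurable N" using lin_meas[OF assms] by auto
  have "(\<lambda>g. (MAX i\<in>{..<n}. \<bar>ln ((logistic (lin d (Z i) g) / (1 - logistic (lin d (Z i) g))) / (E i))\<bar>))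
      \<in> borel_measurable N"
  proof (intro borel_measurable_Max)
    fix i
    have [measurable]: "(\<lambda>g. lin d (Z i) g) \<in> borel_measurable N" using lin_meas[OF assms] by auto
    show "(\<lambda>g. \<bar>ln ((logistic (lin d (Z i) g) / (1 - logistic (lin d (Z i) g))) / (E i))\<bar>) \<in> borel_measurable N"
      unfolding logistic_def by measurable
  qed auto
  hence "{g \<in> space N.
           (MAX i\<in>{..<n}. \<bar>ln ((logistic (lin d (Z i) g) / (1 - logistic (lin d (Z i) g))) / (E i))\<bar>) \<ge> c}
         \<in> sets N" by measurable
  thus ?thesis unfolding posterior_sets posterior_space .
qed



lemma pointwise:
  assumes Zb: "\<And>j. j < d \<Longrightarrow> \<bar>z j\<bar> \<le> CZ" and CZ: "0 \<le> CZ"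
    and e: "0 < e" "e < 1" and s: "1 \<le> s" and r: "0 \<le> r" and M0: "\<bar>t0\<bar> \<le> M0"
    and MA: "0 < MA" and MB: "0 < MB"
    and dA: "max (dist1 d t b t0 b0 / s) (dist2 d t b t0 b0 / sqrt s) < MA * r"
    and lr: "\<bar>ln ((logistic (lin d z g) / (1 - logistic (lin d z g))) / (e / (1 - e)))\<bar> < MB * r"
  shows "\<bar>hval t (lin d z b) (logistic (lin d z g)) - hval t0 (lin d z b0) e\<bar>
           \<le> ((2 * CZ + 1) * MA + MB) * s * r"
    and "\<bar>(t * hval t (lin d z b) (logistic (lin d z g)) + lin d z b)
          - (t0 * hval t0 (lin d z b0) e + lin d z b0)\<bar>
           \<le> ((1 + CZ) * MA + M0 * ((2 * CZ + 1) * MA + MB)) * s * r"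
proof -
  define D where "D = dist1 d t b t0 b0"
  define K where "K = ((2 * CZ + 1) * MA + MB)"
  define h where "h = hval t (lin d z b) (logistic (lin d z g))"
  define h0 where "h0 = hval t0 (lin d z b0) e"
  have "D / s < MA * r" using dA unfolding D_def by linarith
  hence D: "D \<le> MA * s * r" using s by (simp add: divide_less_eq mult_ac)
  have tD: "\<bar>t - t0\<bar> \<le> D" and bD: "(\<Sum>j<d. \<bar>b j - b0 j\<bar>) \<le> D"
    unfolding D_def dist1_def by (auto intro: sum_nonneg)
  have eta: "\<bar>lin d z b - lin d z b0\<bar> \<le> CZ * D"
  proof -
    have "CZ * (\<Sum>j<d. \<bar>b j - b0 j\<bar>) \<le> CZ * D" by (rule mult_left_mono[OF bD CZ])
    moreover have "\<bar>lin d z b - lin d z b0\<bar> \<le> CZ * (\<Sum>j<d. \<bar>b j - b0 j\<bar>)"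
      by (rule lin_diff) (rule Zb)
    ultimately show ?thesis by linarith
  qed
  have ep: "0 < logistic (lin d z g)" "logistic (lin d z g) < 1"
    using logistic_pos logistic_lt1 by auto
  have hd: "\<bar>h - h0\<bar> \<le> 2 * \<bar>lin d z b - lin d z b0\<bar> + \<bar>t - t0\<bar> + MB * r"
    using hval_diff[OF e ep, of t "lin d z b" t0 "lin d z b0"] lr unfolding h_def h0_def by linarith
  have "r \<le> s * r" using mult_right_mono[OF s r] by simp
  hence "MB * r \<le> MB * s * r" using MB by (simp add: mult.assoc)
  moreover have "2 * \<bar>lin d z b - lin d z b0\<bar> + \<bar>t - t0\<bar> \<le> (2 * CZ + 1) * D"
    using eta tD by (simp add: algebra_simps)
  moreover have "(2 * CZ + 1) * D \<le> (2 * CZ + 1) * (MA * s * r)"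
    using D CZ by (intro mult_left_mono) auto
  ultimately have hK: "\<bar>h - h0\<bar> \<le> K * s * r" using hd unfolding K_def by (simp add: algebra_simps)
  thus "\<bar>hval t (lin d z b) (logistic (lin d z g)) - hval t0 (lin d z b0) e\<bar>
           \<le> ((2 * CZ + 1) * MA + MB) * s * r" unfolding h_def h0_def K_def .
  have hb: "\<bar>h\<bar> \<le> 1" unfolding h_def using hval_bounds ep by auto
  have "\<bar>(t * h + lin d z b) - (t0 * h0 + lin d z b0)\<bar>
      = \<bar>(t - t0) * h + t0 * (h - h0) + (lin d z b - lin d z b0)\<bar>" by (simp add: algebra_simps)
  also have "\<dots> \<le> \<bar>t - t0\<bar> * \<bar>h\<bar> + \<bar>t0\<bar> * \<bar>h - h0\<bar> + \<bar>lin d z b - lin d z b0\<bar>"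
    unfolding abs_mult[symmetric]
    by (rule order_trans[OF abs_triangle_ineq add_mono[OF abs_triangle_ineq order.refl]])
  also have "\<dots> \<le> D * 1 + M0 * (K * s * r) + CZ * D"
    using tD hb M0 hK eta by (intro add_mono mult_mono) auto
  also have "\<dots> = (1 + CZ) * D + M0 * (K * s * r)" by (simp add: algebra_simps)
  also have "\<dots> \<le> (1 + CZ) * (MA * s * r) + M0 * (K * s * r)"
    using D CZ by (intro add_right_mono mult_left_mono) auto
  finally show "\<bar>(t * hval t (lin d z b) (logistic (lin d z g)) + lin d z b)
          - (t0 * hval t0 (lin d z b0) e + lin d z b0)\<bar>
           \<le> ((1 + CZ) * MA + M0 * ((2 * CZ + 1) * MA + MB)) * s * r"
    unfolding h_def h0_def K_def by (simp add: algebra_simps)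
qed


lemma inter_ge:
  assumes "prob_space M" "A \<in> sets M" "B \<in> sets M"
  shows "measure M (A \<inter> B) \<ge> measure M A + measure M B - 1"
proof -
  interpret prob_space M by fact
  have "measure M (A \<union> B) \<le> 1" by simp
  moreover have "measure M (A \<union> B) = measure M A + measure M B - measure M (A \<inter> B)"
    using assms(2,3) by (simp add: finite_measure_Union' finite_measure_Diff' measure_Un3 Int_commute)
  ultimately show ?thesis by linarith
qed

lemma outcome_lik_nonneg: "0 \<le> outcome_lik n d Y X Z x"
  unfolding outcome_lik_def by (cases x) (auto intro!: prod_nonneg divide_nonneg_pos add_pos_pos)

lemma ps_lik_nonneg: "0 \<le> ps_lik n d X Z g"
  unfolding ps_lik_def by (auto intro!: prod_nonneg divide_nonneg_pos add_pos_pos)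

theorem lemma3:
  fixes M :: "nat \<Rightarrow> 'w measure"
    and Yv Xv :: "nat \<Rightarrow> 'w \<Rightarrow> nat \<Rightarrow> real"
    and Zv :: "nat \<Rightarrow> 'w \<Rightarrow> nat \<Rightarrow> nat \<Rightarrow> real"
    and d :: "nat \<Rightarrow> nat"
    and \<theta>0 :: "nat \<Rightarrow> real"
    and \<beta>0 :: "nat \<Rightarrow> nat \<Rightarrow> real"
    and e :: "nat \<Rightarrow> nat \<Rightarrow> (nat \<Rightarrow> real) \<Rightarrow> real"
    and piT :: "real \<Rightarrow> real"
    and piB piG :: "nat \<Rightarrow> (nat \<Rightarrow> real) measure"
  \<comment> \<open>data: for each sample size n a probability space carrying (Y_i, X_i, Z_i), i < n\<close>
  assumes data_prob: "\<And>n. prob_space (M n)"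
    and Y_meas: "\<And>n i. (\<lambda>\<omega>. Yv n \<omega> i) \<in> borel_measurable (M n)"
    and X_meas: "\<And>n i. (\<lambda>\<omega>. Xv n \<omega> i) \<in> borel_measurable (M n)"
    and Z_meas: "\<And>n i j. (\<lambda>\<omega>. Zv n \<omega> i j) \<in> borel_measurable (M n)"
    and YX_binary: "\<And>n \<omega> i. \<omega> \<in> space (M n) \<Longrightarrow> i < n \<Longrightarrow>
                      Yv n \<omega> i \<in> {0, 1} \<and> Xv n \<omega> i \<in> {0, 1}"
    \<comment> \<open>outcome model: given X,Z the Y_i are independent with logistic success probabilities\<close>
    and outcome_model: "\<And>n S. S \<subseteq> {..<n} \<Longrightarrow>
        AE \<omega> in M n.
          real_cond_exp (M n)
            (gen_sigma (M n) ({(\<lambda>\<omega>. Xv n \<omega> i) | i. i < n} \<union>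
                              {(\<lambda>\<omega>. Zv n \<omega> i j) | i j. i < n \<and> j < d n}))
            (\<lambda>\<omega>. \<Prod>i\<in>S. Yv n \<omega> i) \<omega>
          = (\<Prod>i\<in>S. logistic (Xv n \<omega> i * \<theta>0 n + lin (d n) (Zv n \<omega> i) (\<beta>0 n)))"
    \<comment> \<open>true propensity score e n i z = P(X_i = 1 | Z_i = z)\<close>
    and propensity: "\<And>n i. i < n \<Longrightarrow>
        AE \<omega> in M n.
          real_cond_exp (M n) (gen_sigma (M n) {(\<lambda>\<omega>. Zv n \<omega> i j) | j. j < d n})
            (\<lambda>\<omega>. Xv n \<omega> i) \<omega> = e n i (Zv n \<omega> i)"
    and propensity_range: "\<And>n i z. 0 < e n i z \<and> e n i z < 1"
    \<comment> \<open>s >= 1 (needed for the normalisations by s in (A4))\<close>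
    and s_pos: "\<And>n. 0 < sparsity (d n) (\<beta>0 n)"
    \<comment> \<open>priors\<close>
    and piT_nonneg: "\<And>x. 0 \<le> piT x"
    and piT_meas: "piT \<in> borel_measurable lborel"
    and piT_prob: "prob_space (density lborel piT)"
    and piB_prob: "\<And>n. prob_space (piB n)"
    and piB_sets: "\<And>n. sets (piB n) = sets (PiM {..<d n} (\<lambda>_. lborel))"
    and piG_prob: "\<And>n. prob_space (piG n)"
    and piG_sets: "\<And>n. sets (piG n) = sets (PiM {..<d n} (\<lambda>_. lborel))"
    \<comment> \<open>(A1)\<close>
    and A1: "(\<lambda>n. ln (real (d n))) \<in> o(\<lambda>n. real n)"
    \<comment> \<open>(A2)\<close>
    and A2: "\<exists>CZ>0. \<forall>n. \<forall>\<omega>\<in>space (M n). \<forall>i<n. \<forall>j<d n. \<bar>Zv n \<omega> i j\<bar> \<le> CZ"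
    \<comment> \<open>(A3)\<close>
    and A3: "(\<lambda>n. real (sparsity (d n) (\<beta>0 n)) ^ 2 * ln (NN (d n) n)) \<in> o(\<lambda>n. sqrt (real n))"
    \<comment> \<open>(A4): posterior contraction of (theta~, beta)\<close>
    and A4: "\<exists>MA CA c1. MA > 0 \<and> CA > 0 \<and> c1 > 0 \<and>
        (\<forall>\<^sub>F n in sequentially. \<exists>E1\<in>sets (M n).
            measure (M n) E1 \<ge> 1 - NN (d n) n powr (- c1) \<and>
            (\<forall>\<omega>\<in>E1.
               measure (post_tb piT (piB n) n (d n) (Yv n \<omega>) (Xv n \<omega>) (Zv n \<omega>))
                 {x \<in> space (post_tb piT (piB n) n (d n) (Yv n \<omega>) (Xv n \<omega>) (Zv n \<omega>)).
                    case x of (t, b) \<Rightarrow>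
                      max (dist1 (d n) t b (\<theta>0 n) (\<beta>0 n) / real (sparsity (d n) (\<beta>0 n)))
                          (dist2 (d n) t b (\<theta>0 n) (\<beta>0 n) / sqrt (real (sparsity (d n) (\<beta>0 n))))
                      \<ge> MA * rate (d n) n}
               \<le> CA * NN (d n) n powr (- c1)))"
    \<comment> \<open>(A5): posterior contraction of the propensity log-odds\<close>
    and A5: "\<exists>MB CB c2. MB > 0 \<and> CB > 0 \<and> c2 > 0 \<and>
        (\<forall>\<^sub>F n in sequentially. \<exists>E2\<in>sets (M n).
            measure (M n) E2 \<ge> 1 - NN (d n) n powr (- c2) \<and>
            (\<forall>\<omega>\<in>E2.
               measure (post_g (piG n) n (d n) (Xv n \<omega>) (Zv n \<omega>))
                 {g \<in> space (post_g (piG n) n (d n) (Xv n \<omega>) (Zv n \<omega>)).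
                    (MAX i\<in>{..<n}.
                       \<bar>ln ((logistic (lin (d n) (Zv n \<omega> i) g) / (1 - logistic (lin (d n) (Zv n \<omega> i) g)))
                            / (e n i (Zv n \<omega> i) / (1 - e n i (Zv n \<omega> i))))\<bar>)
                    \<ge> MB * rate (d n) n}
               \<le> CB * NN (d n) n powr (- c2)))"
    \<comment> \<open>(A6)\<close>
    and A6_cont: "\<And>n. isCont piT (\<theta>0 n)"
    and A6_pos: "\<And>n. piT (\<theta>0 n) > 0"
    and A6_bound: "\<exists>M0>0. \<forall>n. \<bar>\<theta>0 n\<bar> \<le> M0"
  shows "\<exists>Mc Cc c3 c4. Mc > 0 \<and> Cc > 0 \<and> c3 > 0 \<and> c4 > 0 \<and>
    (\<forall>\<^sub>F n in sequentially.
      (\<exists>E3\<in>sets (M n).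
         measure (M n) E3 \<ge> 1 - NN (d n) n powr (- c3) \<and>
         (\<forall>\<omega>\<in>E3.
            measure (post_tb piT (piB n) n (d n) (Yv n \<omega>) (Xv n \<omega>) (Zv n \<omega>)
                       \<Otimes>\<^sub>M post_g (piG n) n (d n) (Xv n \<omega>) (Zv n \<omega>))
              {x \<in> space (post_tb piT (piB n) n (d n) (Yv n \<omega>) (Xv n \<omega>) (Zv n \<omega>)
                            \<Otimes>\<^sub>M post_g (piG n) n (d n) (Xv n \<omega>) (Zv n \<omega>)).
                 case x of ((t, b), g) \<Rightarrow>
                   (MAX i\<in>{..<n}.
                      \<bar>hval t (lin (d n) (Zv n \<omega> i) b) (logistic (lin (d n) (Zv n \<omega> i) g))
                       - hval (\<theta>0 n) (lin (d n) (Zv n \<omega> i) (\<beta>0 n)) (e n i (Zv n \<omega> i))\<bar>)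
                   \<ge> Mc * real (sparsity (d n) (\<beta>0 n)) * rate (d n) n}
            \<le> Cc * NN (d n) n powr (- c3))) \<and>
      (\<exists>E4\<in>sets (M n).
         measure (M n) E4 \<ge> 1 - NN (d n) n powr (- c4) \<and>
         (\<forall>\<omega>\<in>E4.
            measure (post_tb piT (piB n) n (d n) (Yv n \<omega>) (Xv n \<omega>) (Zv n \<omega>)
                       \<Otimes>\<^sub>M post_g (piG n) n (d n) (Xv n \<omega>) (Zv n \<omega>))
              {x \<in> space (post_tb piT (piB n) n (d n) (Yv n \<omega>) (Xv n \<omega>) (Zv n \<omega>)
                            \<Otimes>\<^sub>M post_g (piG n) n (d n) (Xv n \<omega>) (Zv n \<omega>)).
                 case x of ((t, b), g) \<Rightarrow>
                   (MAX i\<in>{..<n}.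
                      \<bar>(t * hval t (lin (d n) (Zv n \<omega> i) b) (logistic (lin (d n) (Zv n \<omega> i) g))
                          + lin (d n) (Zv n \<omega> i) b)
                       - (\<theta>0 n * hval (\<theta>0 n) (lin (d n) (Zv n \<omega> i) (\<beta>0 n)) (e n i (Zv n \<omega> i))
                          + lin (d n) (Zv n \<omega> i) (\<beta>0 n))\<bar>)
                   \<ge> Mc * real (sparsity (d n) (\<beta>0 n)) * rate (d n) n}
            \<le> Cc * NN (d n) n powr (- c4))))"
proof -
  obtain MA CA c1 where MA: "MA > 0" "CA > 0" "c1 > 0" and EV1: "\<forall>\<^sub>F n in sequentially. \<exists>E1\<in>sets (M n).
            measure (M n) E1 \<ge> 1 - NN (d n) n powr (- c1) \<and>
            (\<forall>\<omega>\<in>E1.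
               measure (post_tb piT (piB n) n (d n) (Yv n \<omega>) (Xv n \<omega>) (Zv n \<omega>))
                 {x \<in> space (post_tb piT (piB n) n (d n) (Yv n \<omega>) (Xv n \<omega>) (Zv n \<omega>)).
                    case x of (t, b) \<Rightarrow>
                      max (dist1 (d n) t b (\<theta>0 n) (\<beta>0 n) / real (sparsity (d n) (\<beta>0 n)))
                          (dist2 (d n) t b (\<theta>0 n) (\<beta>0 n) / sqrt (real (sparsity (d n) (\<beta>0 n))))
                      \<ge> MA * rate (d n) n}
               \<le> CA * NN (d n) n powr (- c1))"
    using A4 by blast
  obtain MB CB c2 where MB: "MB > 0" "CB > 0" "c2 > 0" and EV2: "\<forall>\<^sub>F n in sequentially. \<exists>E2\<in>sets (M n).
            measure (M n) E2 \<ge> 1 - NN (d n) n powr (- c2) \<and>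
            (\<forall>\<omega>\<in>E2.
               measure (post_g (piG n) n (d n) (Xv n \<omega>) (Zv n \<omega>))
                 {g \<in> space (post_g (piG n) n (d n) (Xv n \<omega>) (Zv n \<omega>)).
                    (MAX i\<in>{..<n}.
                       \<bar>ln ((logistic (lin (d n) (Zv n \<omega> i) g) / (1 - logistic (lin (d n) (Zv n \<omega> i) g)))
                            / (e n i (Zv n \<omega> i) / (1 - e n i (Zv n \<omega> i))))\<bar>)
                    \<ge> MB * rate (d n) n}
               \<le> CB * NN (d n) n powr (- c2))"
    using A5 by blast
  obtain CZ where CZ: "CZ > 0" and Zb: "\<And>n \<omega> i j. \<omega> \<in> space (M n) \<Longrightarrow> i < n \<Longrightarrow> j < d n \<Longrightarrow> \<bar>Zv n \<omega> i j\<bar> \<le> CZ"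
    using A2 by blast
  obtain M0 where M0: "M0 > 0" and th0: "\<And>n. \<bar>\<theta>0 n\<bar> \<le> M0" using A6_bound by blast
  define K where "K = (2 * CZ + 1) * MA + MB"
  define Kp where "Kp = (1 + CZ) * MA + M0 * ((2 * CZ + 1) * MA + MB)"
  define Mc where "Mc = K + Kp + 1"
  define Cc where "Cc = CA + CB"
  define c3 where "c3 = min c1 c2 / 2"
  have K0: "K \<ge> 0" unfolding K_def using CZ MA MB by auto
  have Kp0: "Kp \<ge> 0" unfolding Kp_def using CZ MA MB M0 by auto
  have Mc0: "Mc > 0" and KMc: "K < Mc" and KpMc: "Kp < Mc" unfolding Mc_def using K0 Kp0 by auto
  have Cc0: "Cc > 0" unfolding Cc_def using MA MB by auto
  have c30: "c3 > 0" unfolding c3_def using MA MB by auto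
  have ev3: "\<forall>\<^sub>F n in sequentially. 2 \<le> real n powr c3" using c30 by real_asymp
  have ev4: "\<forall>\<^sub>F n in sequentially. (2::nat) \<le> n" by (rule eventually_ge_at_top)
  have comb: "\<forall>\<^sub>F n in sequentially. (\<exists>E1\<in>sets (M n).
            measure (M n) E1 \<ge> 1 - NN (d n) n powr (- c1) \<and>
            (\<forall>\<omega>\<in>E1.
               measure (post_tb piT (piB n) n (d n) (Yv n \<omega>) (Xv n \<omega>) (Zv n \<omega>))
                 {x \<in> space (post_tb piT (piB n) n (d n) (Yv n \<omega>) (Xv n \<omega>) (Zv n \<omega>)).
                    case x of (t, b) \<Rightarrow>
                      max (dist1 (d n) t b (\<theta>0 n) (\<beta>0 n) / real (sparsity (d n) (\<beta>0 n)))
                          (dist2 (d n) t b (\<theta>0 n) (\<beta>0 n) / sqrt (real (sparsity (d n) (\<beta>0 n))))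
                      \<ge> MA * rate (d n) n}
               \<le> CA * NN (d n) n powr (- c1))) \<and> (\<exists>E2\<in>sets (M n).
            measure (M n) E2 \<ge> 1 - NN (d n) n powr (- c2) \<and>
            (\<forall>\<omega>\<in>E2.
               measure (post_g (piG n) n (d n) (Xv n \<omega>) (Zv n \<omega>))
                 {g \<in> space (post_g (piG n) n (d n) (Xv n \<omega>) (Zv n \<omega>)).
                    (MAX i\<in>{..<n}.
                       \<bar>ln ((logistic (lin (d n) (Zv n \<omega> i) g) / (1 - logistic (lin (d n) (Zv n \<omega> i) g)))
                            / (e n i (Zv n \<omega> i) / (1 - e n i (Zv n \<omega> i))))\<bar>)
                    \<ge> MB * rate (d n) n}
               \<le> CB * NN (d n) n powr (- c2))) \<and> 2 \<le> real n powr c3 \<and> 2 \<le> n"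
    using EV1 EV2 ev3 ev4 by eventually_elim blast
  show ?thesis
    apply (rule exI[where x=Mc], rule exI[where x=Cc], rule exI[where x=c3], rule exI[where x=c3])
    apply (intro conjI Mc0 Cc0 c30)
    apply (rule eventually_mono[OF comb])
    apply (elim conjE bexE)
    subgoal premises prems for n E1 E2
    proof -
      have hE1: "E1 \<in> sets (M n)" and hE2: "E2 \<in> sets (M n)" using prems by blast+
      have mE1: "measure (M n) E1 \<ge> 1 - NN (d n) n powr (- c1)" using prems by blast
      have mE2: "measure (M n) E2 \<ge> 1 - NN (d n) n powr (- c2)" using prems by blast
      have pw: "2 \<le> real n powr c3" and n2: "2 \<le> n" using prems by blast+
      define s where "s = real (sparsity (d n) (\<beta>0 n))"
      define rt where "rt = rate (d n) n"
      define N where "N = NN (d n) n"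
      have s1: "1 \<le> s" unfolding s_def using s_pos[of n] by linarith
      have Nn: "real n \<le> N" unfolding N_def NN_def by simp
      have N2: "2 \<le> N" using Nn n2 by linarith
      have rt0: "0 < rt" unfolding rt_def rate_def N_def[symmetric] using N2 n2 by auto
      have srt: "0 < s * rt" using s1 rt0 by auto
      have NP: "2 \<le> N powr c3" using pw powr_mono2[of c3 "real n" N] c30 Nn by linarith
      have pc: "N powr (- c1) \<le> N powr (- c3)" "N powr (- c2) \<le> N powr (- c3)"
        using N2 c30 MA MB by (auto intro!: powr_mono simp: c3_def)
      have pc2: "N powr (- c1) + N powr (- c2) \<le> N powr (- c3)"
      proof -
        have "N powr (- c1) \<le> N powr (- c3 - c3)" "N powr (- c2) \<le> N powr (- c3 - c3)"
          using N2 c30 MA MB by (auto intro!: powr_mono simp: c3_def)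
        moreover have "N powr (- c3 - c3) = N powr (- c3) * (1 / N powr c3)"
        proof -
          have "N powr (- c3 - c3) = N powr (- c3) * N powr (- c3)"
            by (simp add: powr_add[symmetric])
          moreover have "N powr (- c3) = 1 / N powr c3" by (simp add: powr_minus_divide)
          ultimately show ?thesis by metis
        qed
        moreover have "1 / N powr c3 \<le> 1 / 2" using NP by (simp add: divide_le_eq)
        moreover have "0 \<le> N powr (- c3)" by simp
        ultimately have "N powr (- c1) + N powr (- c2) \<le> 2 * (N powr (- c3) * (1/2))"
          by (smt (verit, ccfv_SIG) mult_left_mono)
        thus ?thesis by simp
      qed
      have E12: "E1 \<inter> E2 \<in> sets (M n)" using hE1 hE2 by auto
      have mE12: "measure (M n) (E1 \<inter> E2) \<ge> 1 - N powr (- c3)"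
        using inter_ge[OF data_prob hE1 hE2] mE1 mE2 pc2 unfolding N_def by linarith
      have Espace: "\<omega> \<in> space (M n)" if "\<omega> \<in> E1 \<inter> E2" for \<omega>
        using that hE1 sets.sets_into_space by blast
      have gen: "measure (post_tb piT (piB n) n (d n) (Yv n \<omega>) (Xv n \<omega>) (Zv n \<omega>)
                       \<Otimes>\<^sub>M post_g (piG n) n (d n) (Xv n \<omega>) (Zv n \<omega>))
              {x \<in> space (post_tb piT (piB n) n (d n) (Yv n \<omega>) (Xv n \<omega>) (Zv n \<omega>)
                            \<Otimes>\<^sub>M post_g (piG n) n (d n) (Xv n \<omega>) (Zv n \<omega>)).
                 case x of ((t, b), g) \<Rightarrow> (MAX i\<in>{..<n}. \<bar>F t b g i\<bar>) \<ge> Mc * s * rt}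
            \<le> Cc * N powr (- c3)"
        if om: "\<omega> \<in> E1 \<inter> E2" and KF: "Kf < Mc"
          and FB: "\<And>t b g i. max (dist1 (d n) t b (\<theta>0 n) (\<beta>0 n) / s)
                          (dist2 (d n) t b (\<theta>0 n) (\<beta>0 n) / sqrt s) < MA * rt \<Longrightarrow>
                (\<And>i. i < n \<Longrightarrow> \<bar>ln ((logistic (lin (d n) (Zv n \<omega> i) g) / (1 - logistic (lin (d n) (Zv n \<omega> i) g)))
                            / (e n i (Zv n \<omega> i) / (1 - e n i (Zv n \<omega> i))))\<bar> < MB * rt) \<Longrightarrow>
                i < n \<Longrightarrow> \<bar>F t b g i\<bar> \<le> Kf * s * rt"
        for \<omega> F Kf
      proof -
        define P1 where "P1 = post_tb piT (piB n) n (d n) (Yv n \<omega>) (Xv n \<omega>) (Zv n \<omega>)"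
        define P2 where "P2 = post_g (piG n) n (d n) (Xv n \<omega>) (Zv n \<omega>)"
        define BA where "BA = {x \<in> space P1. case x of (t, b) \<Rightarrow>
                      max (dist1 (d n) t b (\<theta>0 n) (\<beta>0 n) / s)
                          (dist2 (d n) t b (\<theta>0 n) (\<beta>0 n) / sqrt s) \<ge> MA * rt}"
        define BB where "BB = {g \<in> space P2.
                    (MAX i\<in>{..<n}.
                       \<bar>ln ((logistic (lin (d n) (Zv n \<omega> i) g) / (1 - logistic (lin (d n) (Zv n \<omega> i) g)))
                            / (e n i (Zv n \<omega> i) / (1 - e n i (Zv n \<omega> i))))\<bar>)
                    \<ge> MB * rt}"
        have P1d: "P1 = posterior (density lborel piT \<Otimes>\<^sub>M piB n) (outcome_lik n (d n) (Yv n \<omega>) (Xv n \<omega>) (Zv n \<omega>))"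
          unfolding P1_def post_tb_def ..
        have P2d: "P2 = posterior (piG n) (ps_lik n (d n) (Xv n \<omega>) (Zv n \<omega>))"
          unfolding P2_def post_g_def ..
        have f1: "finite_measure P1" "measure P1 (space P1) \<le> 1"
          unfolding P1d using posterior_finite[OF outcome_lik_nonneg] by auto
        have f2: "finite_measure P2" "measure P2 (space P2) \<le> 1"
          unfolding P2d using posterior_finite[OF ps_lik_nonneg] by auto
        have BAs: "BA \<in> sets P1" unfolding BA_def P1d s_def
          by (rule badA_meas[OF piB_sets piT_meas])
        have BBs: "BB \<in> sets P2" unfolding BB_def P2d
          by (rule badB_meas[OF piG_sets])
        have mBA: "measure P1 BA \<le> CA * N powr (- c1)"
          using prems om unfolding BA_def P1_def s_def rt_def N_def by blast
        have mBB: "measure P2 BB \<le> CB * N powr (- c2)"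
          using prems om unfolding BB_def P2_def rt_def N_def by blast
        have sub: "{x \<in> space (P1 \<Otimes>\<^sub>M P2).
                 case x of ((t, b), g) \<Rightarrow> (MAX i\<in>{..<n}. \<bar>F t b g i\<bar>) \<ge> Mc * s * rt}
              \<subseteq> (BA \<times> space P2) \<union> (space P1 \<times> BB)"
        proof
          fix x assume xS: "x \<in> {x \<in> space (P1 \<Otimes>\<^sub>M P2).
                 case x of ((t, b), g) \<Rightarrow> (MAX i\<in>{..<n}. \<bar>F t b g i\<bar>) \<ge> Mc * s * rt}"
          obtain t b g where x: "x = ((t, b), g)" by (metis prod.collapse)
          have sp: "(t, b) \<in> space P1" "g \<in> space P2" using xS x by (auto simp: space_pair_measure)
          have big: "(MAX i\<in>{..<n}. \<bar>F t b g i\<bar>) \<ge> Mc * s * rt" using xS x by auto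
          show "x \<in> (BA \<times> space P2) \<union> (space P1 \<times> BB)"
          proof (rule ccontr)
            assume "x \<notin> (BA \<times> space P2) \<union> (space P1 \<times> BB)"
            hence nA: "(t, b) \<notin> BA" and nB: "g \<notin> BB" using x sp by auto
            have dA: "max (dist1 (d n) t b (\<theta>0 n) (\<beta>0 n) / s)
                          (dist2 (d n) t b (\<theta>0 n) (\<beta>0 n) / sqrt s) < MA * rt"
              using nA sp unfolding BA_def by auto
            have lr: "\<bar>ln ((logistic (lin (d n) (Zv n \<omega> i) g) / (1 - logistic (lin (d n) (Zv n \<omega> i) g)))
                            / (e n i (Zv n \<omega> i) / (1 - e n i (Zv n \<omega> i))))\<bar> < MB * rt"
              if "i < n" for i
            proof -
              have "\<bar>ln ((logistic (lin (d n) (Zv n \<omega> i) g) / (1 - logistic (lin (d n) (Zv n \<omega> i) g)))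
                            / (e n i (Zv n \<omega> i) / (1 - e n i (Zv n \<omega> i))))\<bar>
                  \<le> (MAX i\<in>{..<n}.
                       \<bar>ln ((logistic (lin (d n) (Zv n \<omega> i) g) / (1 - logistic (lin (d n) (Zv n \<omega> i) g)))
                            / (e n i (Zv n \<omega> i) / (1 - e n i (Zv n \<omega> i))))\<bar>)"
                using that by (intro Max_ge) auto
              moreover have "\<not> (MAX i\<in>{..<n}.
                       \<bar>ln ((logistic (lin (d n) (Zv n \<omega> i) g) / (1 - logistic (lin (d n) (Zv n \<omega> i) g)))
                            / (e n i (Zv n \<omega> i) / (1 - e n i (Zv n \<omega> i))))\<bar>) \<ge> MB * rt"
                using nB sp unfolding BB_def by auto
              ultimately show ?thesis by linarith
            qed
            have "(MAX i\<in>{..<n}. \<bar>F t b g i\<bar>) \<le> Kf * s * rt"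
              using n2 FB[OF dA lr] by (subst Max_le_iff) (auto simp: lessThan_empty_iff)
            moreover have "Kf * s * rt < Mc * s * rt" using mult_strict_right_mono[OF KF srt] by (simp add: mult.assoc)
            ultimately show False using big by linarith
          qed
        qed
        have "measure (P1 \<Otimes>\<^sub>M P2) {x \<in> space (P1 \<Otimes>\<^sub>M P2).
                 case x of ((t, b), g) \<Rightarrow> (MAX i\<in>{..<n}. \<bar>F t b g i\<bar>) \<ge> Mc * s * rt}
              \<le> measure P1 BA + measure P2 BB"
          by (rule prod_bound[OF f1(1) f2(1) f1(2) f2(2) BAs BBs sub])
        also have "\<dots> \<le> CA * N powr (- c1) + CB * N powr (- c2)" using mBA mBB by linarith
        also have "\<dots> \<le> CA * N powr (- c3) + CB * N powr (- c3)"
          using pc MA MB by (intro add_mono mult_left_mono) auto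
        also have "\<dots> = Cc * N powr (- c3)" unfolding Cc_def by (simp add: algebra_simps)
        finally show ?thesis unfolding P1_def P2_def .
      qed
      have ptw: "\<bar>hval t (lin (d n) (Zv n \<omega> i) b) (logistic (lin (d n) (Zv n \<omega> i) g))
                       - hval (\<theta>0 n) (lin (d n) (Zv n \<omega> i) (\<beta>0 n)) (e n i (Zv n \<omega> i))\<bar> \<le> K * s * rt
             \<and> \<bar>(t * hval t (lin (d n) (Zv n \<omega> i) b) (logistic (lin (d n) (Zv n \<omega> i) g))
                          + lin (d n) (Zv n \<omega> i) b)
                       - (\<theta>0 n * hval (\<theta>0 n) (lin (d n) (Zv n \<omega> i) (\<beta>0 n)) (e n i (Zv n \<omega> i))
                          + lin (d n) (Zv n \<omega> i) (\<beta>0 n))\<bar> \<le> Kp * s * rt"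
        if om: "\<omega> \<in> E1 \<inter> E2" and dA: "max (dist1 (d n) t b (\<theta>0 n) (\<beta>0 n) / s)
                          (dist2 (d n) t b (\<theta>0 n) (\<beta>0 n) / sqrt s) < MA * rt"
          and lr: "\<And>i. i < n \<Longrightarrow> \<bar>ln ((logistic (lin (d n) (Zv n \<omega> i) g) / (1 - logistic (lin (d n) (Zv n \<omega> i) g)))
                            / (e n i (Zv n \<omega> i) / (1 - e n i (Zv n \<omega> i))))\<bar> < MB * rt"
          and i: "i < n"
        for \<omega> t b g i
      proof -
        have zb: "\<And>j. j < d n \<Longrightarrow> \<bar>Zv n \<omega> i j\<bar> \<le> CZ" using Zb[OF Espace[OF om] i] by blast
        have ee: "0 < e n i (Zv n \<omega> i)" "e n i (Zv n \<omega> i) < 1" using propensity_range by auto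
        show ?thesis
          using pointwise[OF zb _ ee s1 _ th0 MA(1) MB(1) dA lr[OF i]] CZ rt0
          unfolding K_def Kp_def by auto
      qed
      show ?thesis
      proof (intro conjI bexI[where x="E1 \<inter> E2"] E12 ballI)
        show "1 - NN (d n) n powr - c3 \<le> measure (M n) (E1 \<inter> E2)"
          using mE12 unfolding N_def .
        show "1 - NN (d n) n powr - c3 \<le> measure (M n) (E1 \<inter> E2)"
          using mE12 unfolding N_def .
      next
        fix \<omega> assume om: "\<omega> \<in> E1 \<inter> E2"
        show "measure (post_tb piT (piB n) n (d n) (Yv n \<omega>) (Xv n \<omega>) (Zv n \<omega>)
                       \<Otimes>\<^sub>M post_g (piG n) n (d n) (Xv n \<omega>) (Zv n \<omega>))
              {x \<in> space (post_tb piT (piB n) n (d n) (Yv n \<omega>) (Xv n \<omega>) (Zv n \<omega>)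
                            \<Otimes>\<^sub>M post_g (piG n) n (d n) (Xv n \<omega>) (Zv n \<omega>)).
                 case x of ((t, b), g) \<Rightarrow>
                   (MAX i\<in>{..<n}.
                      \<bar>hval t (lin (d n) (Zv n \<omega> i) b) (logistic (lin (d n) (Zv n \<omega> i) g))
                       - hval (\<theta>0 n) (lin (d n) (Zv n \<omega> i) (\<beta>0 n)) (e n i (Zv n \<omega> i))\<bar>)
                   \<ge> Mc * real (sparsity (d n) (\<beta>0 n)) * rate (d n) n}
            \<le> Cc * NN (d n) n powr (- c3)"
          unfolding s_def[symmetric] rt_def[symmetric] N_def[symmetric]
          by (rule gen[OF om KMc]) (use ptw[OF om] in blast)
      next
        fix \<omega> assume om: "\<omega> \<in> E1 \<inter> E2"
        show "measure (post_tb piT (piB n) n (d n) (Yv n \<omega>) (Xv n \<omega>) (Zv n \<omega>)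
                       \<Otimes>\<^sub>M post_g (piG n) n (d n) (Xv n \<omega>) (Zv n \<omega>))
              {x \<in> space (post_tb piT (piB n) n (d n) (Yv n \<omega>) (Xv n \<omega>) (Zv n \<omega>)
                            \<Otimes>\<^sub>M post_g (piG n) n (d n) (Xv n \<omega>) (Zv n \<omega>)).
                 case x of ((t, b), g) \<Rightarrow>
                   (MAX i\<in>{..<n}.
                      \<bar>(t * hval t (lin (d n) (Zv n \<omega> i) b) (logistic (lin (d n) (Zv n \<omega> i) g))
                          + lin (d n) (Zv n \<omega> i) b)
                       - (\<theta>0 n * hval (\<theta>0 n) (lin (d n) (Zv n \<omega> i) (\<beta>0 n)) (e n i (Zv n \<omega> i))
                          + lin (d n) (Zv n \<omega> i) (\<beta>0 n))\<bar>)
                   \<ge> Mc * real (sparsity (d n) (\<beta>0 n)) * rate (d n) n}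
            \<le> Cc * NN (d n) n powr (- c3)"
          unfolding s_def[symmetric] rt_def[symmetric] N_def[symmetric]
          by (rule gen[OF om KpMc]) (use ptw[OF om] in blast)
      qed
    qed
    done
qed

end
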